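(* Let $k\ge2$, let $U\subseteq\mathbb{R}^d$ be a set of $k$ distinct points, and let $V\subseteq U$ with $|V|\ge2$. Sample threshold cuts independently from $D_2'(V)$ until every far pair of points of $V$ is separated by at least one sampled cut. Then the expected number of sampled cuts is at most $24\ln|V|\cdot s(V)\cdot\frac{L_2(V)}{\Delta(V)}$.
   Context: For dimension $i$ and reals $x,y$, $\mathcal{I}_i(x,y)$ is the set of consecutive intervals into which the segment between $x$ and $y$ is partitioned by the projections $v_i$ ($v\in V$) lying between $x$ and $y$. $\mathcal{I}_i=\mathcal{I}_i(\min_{v\in V}v_i,\max_{v\in V}v_i)$, $\mathcal{I}_{\mathrm{all}}(V)=\{(i,[a,b]):[a,b]\in\mathcal{I}_i\}$, $L_2(V)=\sum_{(i,[a,b])\in\mathcal{I}_{\mathrm{all}}(V)}(b-a)^2$. Pseudo-distance: $d_2(x,y)=\sum_i\sum_{[a,b]\in\mathcal{I}_i(x_i,y_i)}(b-a)^2$. $\Delta(V)=\max_{x,y\in V}\|x-y\|_2^2$. A pair $x,y\in V$ is far if $\|x-y\|_2^2\ge\Delta(V)/2$ and close if $\|x-y\|_2^2<\Delta(V)/k^4$. The stretch of a pair is $\|x-y\|_2^2/d_2(x,y)$ and $s(V)$ is the maximum stretch of a far pair in $V$. $R(V)$ is the set of $(i,[a,b])\in\mathcal{I}_{\mathrm{all}}(V)$ with $[a,b]$ contained in $[\min(x_i,y_i),\max(x_i,y_i)]$ for some close pair $x,y$; $L_2'(V)=\sum_{\mathcal{I}_{\mathrm{all}}(V)\setminus R(V)}(b-a)^2$.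 The distribution $D_2'(V)$ chooses $(i,[a,b])\in\mathcal{I}_{\mathrm{all}}(V)\setminus R(V)$ with probability $(b-a)^2/L_2'(V)$ and then $\theta\in[a,b]$ with density $\frac{4}{(b-a)^2}\min(\theta-a,b-\theta)$. A cut $(i,\theta)$ separates $x,y$ if $\theta$ lies strictly between $x_i$ and $y_i$. *)

theory Defs
  imports "HOL-Probability.Probability"
begin

type_synonym 'd point = "real ^ 'd"

definition breakpts :: "'d::finite \<Rightarrow> 'd point set \<Rightarrow> real \<Rightarrow> real \<Rightarrow> real set" where
  "breakpts i V x y = {x, y} \<union> {p \<in> (\<lambda>v. v $ i) ` V. min x y \<le> p \<and> p \<le> max x y}"

definition Iv :: "'d::finite \<Rightarrow> 'd point set \<Rightarrow> real \<Rightarrow> real \<Rightarrow> (real \<times> real) set" where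
  "Iv i V x y = {(a, b). a \<in> breakpts i V x y \<and> b \<in> breakpts i V x y \<and> a < b \<and>
                   \<not> (\<exists>p \<in> breakpts i V x y. a < p \<and> p < b)}"

definition Idim :: "'d::finite \<Rightarrow> 'd point set \<Rightarrow> (real \<times> real) set" where
  "Idim i V = Iv i V (Min ((\<lambda>v. v $ i) ` V)) (Max ((\<lambda>v. v $ i) ` V))"

definition Iall :: "'d::finite point set \<Rightarrow> ('d \<times> real \<times> real) set" where
  "Iall V = {(i, a, b). (a, b) \<in> Idim i V}"

definition L2 :: "'d::finite point set \<Rightarrow> real" where
  "L2 V = (\<Sum>(i, a, b) \<in> Iall V. (b - a)\<^sup>2)"

definition d2 :: "'d::finite point set \<Rightarrow> 'd point \<Rightarrow> 'd point \<Rightarrow> real" where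
  "d2 V x y = (\<Sum>i\<in>UNIV. \<Sum>(a, b) \<in> Iv i V (x $ i) (y $ i). (b - a)\<^sup>2)"

definition Delta :: "'d::finite point set \<Rightarrow> real" where
  "Delta V = Max {(norm (x - y))\<^sup>2 | x y. x \<in> V \<and> y \<in> V}"

definition far :: "'d::finite point set \<Rightarrow> 'd point \<Rightarrow> 'd point \<Rightarrow> bool" where
  "far V x y \<longleftrightarrow> (norm (x - y))\<^sup>2 \<ge> Delta V / 2"

definition close :: "nat \<Rightarrow> 'd::finite point set \<Rightarrow> 'd point \<Rightarrow> 'd point \<Rightarrow> bool" where
  "close k V x y \<longleftrightarrow> (norm (x - y))\<^sup>2 < Delta V / (real k) ^ 4"

definition stretch :: "'d::finite point set \<Rightarrow> 'd point \<Rightarrow> 'd point \<Rightarrow> real" where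
  "stretch V x y = (norm (x - y))\<^sup>2 / d2 V x y"

definition s_max :: "'d::finite point set \<Rightarrow> real" where
  "s_max V = Max {stretch V x y | x y. x \<in> V \<and> y \<in> V \<and> far V x y}"

definition R :: "nat \<Rightarrow> 'd::finite point set \<Rightarrow> ('d \<times> real \<times> real) set" where
  "R k V = {(i, a, b) \<in> Iall V. \<exists>x\<in>V. \<exists>y\<in>V. close k V x y \<and>
              min (x $ i) (y $ i) \<le> a \<and> b \<le> max (x $ i) (y $ i)}"

definition L2' :: "nat \<Rightarrow> 'd::finite point set \<Rightarrow> real" where
  "L2' k V = (\<Sum>(i, a, b) \<in> Iall V - R k V. (b - a)\<^sup>2)"

text \<open>The distribution D_2'(V) on cuts (i, theta): interval (i,[a,b]) chosen with probability
 (b-a)^2/L2', then theta with density 4/(b-a)^2 min(theta-a, b-theta); the joint density is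
 the sum below (intervals in one dimension overlap only at endpoints).\<close>
definition D2' :: "nat \<Rightarrow> 'd::finite point set \<Rightarrow> ('d \<times> real) measure" where
  "D2' k V = density (count_space UNIV \<Otimes>\<^sub>M lborel)
     (\<lambda>(i, \<theta>). ennreal (\<Sum>(j, a, b) \<in> Iall V - R k V.
         ((b - a)\<^sup>2 / L2' k V) * (if j = i \<and> a \<le> \<theta> \<and> \<theta> \<le> b
                                    then 4 / (b - a)\<^sup>2 * min (\<theta> - a) (b - \<theta>) else 0)))"

definition separates :: "'d::finite \<times> real \<Rightarrow> 'd point \<Rightarrow> 'd point \<Rightarrow> bool" where
  "separates c x y \<longleftrightarrow> min (x $ fst c) (y $ fst c) < snd c \<and> snd c < max (x $ fst c) (y $ fst c)"

definition num_cuts :: "'d::finite point set \<Rightarrow> ('d \<times> real) stream \<Rightarrow> ennreal" where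
  "num_cuts V \<omega> = (if \<exists>n. \<forall>x\<in>V. \<forall>y\<in>V. far V x y \<longrightarrow> (\<exists>j<n. separates (\<omega> !! j) x y)
     then of_nat (LEAST n. \<forall>x\<in>V. \<forall>y\<in>V. far V x y \<longrightarrow> (\<exists>j<n. separates (\<omega> !! j) x y))
     else \<infinity>)"

end

theory Submission
  imports Defs
begin


lemma (in prob_space) stream_prefix:
  assumes [measurable]: "C \<in> sets M"
  shows "emeasure (stream_space M) {\<omega> \<in> space (stream_space M). \<forall>j<t. \<omega> !! j \<in> C} = emeasure M C ^ t"
proof (induction t)
  case 0
  interpret S: prob_space "stream_space M" by (rule prob_space_stream_space)
  show ?case using S.emeasure_space_1 by simp
next
  case (Suc t)
  have "emeasure (stream_space M) {\<omega> \<in> space (stream_space M). \<forall>j<Suc t. \<omega> !! j \<in> C}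
     = (\<integral>\<^sup>+c. emeasure (stream_space M) {x\<in>space (stream_space M). c ## x \<in> {\<omega> \<in> space (stream_space M). \<forall>j<Suc t. \<omega> !! j \<in> C}} \<partial>M)"
    by (rule emeasure_stream_space) measurable
  also have "\<dots> = (\<integral>\<^sup>+c. emeasure M C ^ t * indicator C c \<partial>M)"
  proof (rule nn_integral_cong)
    fix c assume c: "c \<in> space M"
    show "emeasure (stream_space M) {x\<in>space (stream_space M). c ## x \<in> {\<omega> \<in> space (stream_space M). \<forall>j<Suc t. \<omega> !! j \<in> C}} = emeasure M C ^ t * indicator C c"
    proof (cases "c \<in> C")
      case True
      have "{x\<in>space (stream_space M). c ## x \<in> {\<omega> \<in> space (stream_space M). \<forall>j<Suc t. \<omega> !! j \<in> C}}
          = {\<omega> \<in> space (stream_space M). \<forall>j<t. \<omega> !! j \<in> C}"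
        using True c by (auto simp: space_stream_space less_Suc_eq_0_disj)
      then show ?thesis using Suc True by simp
    next
      case False
      then have eq: "{x\<in>space (stream_space M). c ## x \<in> {\<omega> \<in> space (stream_space M). \<forall>j<Suc t. \<omega> !! j \<in> C}} = {}"
        by (auto dest!: spec[of _ 0])
      show ?thesis unfolding eq using False by simp
    qed
  qed
  also have "\<dots> = emeasure M C ^ t * emeasure M C"
    by (simp add: nn_integral_cmult)
  finally show ?case by (simp add: mult.commute)
qed



definition tri :: "real \<Rightarrow> real \<Rightarrow> real \<Rightarrow> real" where
  "tri a b \<theta> = (if a \<le> \<theta> \<and> \<theta> \<le> b then 4 / (b - a)\<^sup>2 * min (\<theta> - a) (b - \<theta>) else 0)"

lemma tri_nonneg: "a < b \<Longrightarrow> 0 \<le> tri a b \<theta>"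
  by (simp add: tri_def)

lemma tri_measurable[measurable]: "tri a b \<in> borel_measurable borel"
  unfolding tri_def by measurable

lemma tri_has_integral:
  fixes a b :: real
  assumes ab: "a < b"
  shows "((\<lambda>\<theta>. 4 / (b - a)\<^sup>2 * min (\<theta> - a) (b - \<theta>)) has_integral 1) {a..b}"
proof -
  define m where "m = (a + b) / 2"
  define c where "c = 4 / (b - a)\<^sup>2"
  have am: "a \<le> m" "m \<le> b" using ab by (auto simp: m_def)
  have h1: "((\<lambda>\<theta>. c * (\<theta> - a)) has_integral (c * (m - a)\<^sup>2 / 2 - c * (a - a)\<^sup>2 / 2)) {a..m}"
    apply (rule fundamental_theorem_of_calculus[OF am(1)])
    apply (auto intro!: derivative_eq_intros simp: has_real_derivative_iff_has_vector_derivative[symmetric] power2_eq_square algebra_simps)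
    apply (simp_all add: field_simps)
    done
  have h2: "((\<lambda>\<theta>. c * (b - \<theta>)) has_integral ((- c * (b - b)\<^sup>2 / 2) - (- c * (b - m)\<^sup>2 / 2))) {m..b}"
    apply (rule fundamental_theorem_of_calculus[OF am(2)])
    apply (auto intro!: derivative_eq_intros simp: has_real_derivative_iff_has_vector_derivative[symmetric] power2_eq_square algebra_simps)
    apply (simp_all add: field_simps)
    done
  have h1s: "((\<lambda>\<theta>. c * (\<theta> - a)) has_integral (c * (m - a)\<^sup>2 / 2)) {a..m}"
    using h1 by simp
  have h2s: "((\<lambda>\<theta>. c * (b - \<theta>)) has_integral (c * (b - m)\<^sup>2 / 2)) {m..b}"
    using h2 by simp
  have h1': "((\<lambda>\<theta>. c * min (\<theta> - a) (b - \<theta>)) has_integral (c * (m - a)\<^sup>2 / 2)) {a..m}"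
    by (rule has_integral_eq[OF _ h1s]) (auto simp: m_def)
  have h2': "((\<lambda>\<theta>. c * min (\<theta> - a) (b - \<theta>)) has_integral (c * (b - m)\<^sup>2 / 2)) {m..b}"
    by (rule has_integral_eq[OF _ h2s]) (auto simp: m_def)
  have "((\<lambda>\<theta>. c * min (\<theta> - a) (b - \<theta>)) has_integral (c * (m - a)\<^sup>2 / 2 + c * (b - m)\<^sup>2 / 2)) {a..b}"
    by (rule has_integral_combine[OF am h1' h2'])
  moreover have "c * (m - a)\<^sup>2 / 2 + c * (b - m)\<^sup>2 / 2 = 1"
  proof -
    have e: "m - a = (b - a) / 2" "b - m = (b - a) / 2" by (auto simp: m_def field_simps)
    have nz: "(b - a)\<^sup>2 \<noteq> 0" using ab by simp
    have "c * (m - a)\<^sup>2 / 2 + c * (b - m)\<^sup>2 / 2 = c * (b - a)\<^sup>2 / 4"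
      unfolding e by (simp add: power_divide)
    also have "\<dots> = 1" using nz by (simp add: c_def)
    finally show ?thesis .
  qed
  ultimately show ?thesis by (simp add: c_def)
qed

lemma tri_nn_integral:
  assumes ab: "a < b"
  shows "(\<integral>\<^sup>+\<theta>. ennreal (tri a b \<theta>) \<partial>lborel) = 1"
proof -
  have "((\<lambda>\<theta>. if \<theta> \<in> {a..b} then 4 / (b - a)\<^sup>2 * min (\<theta> - a) (b - \<theta>) else 0) has_integral 1) UNIV"
    using tri_has_integral[OF ab] by (simp only: has_integral_restrict_UNIV)
  then have "(tri a b has_integral 1) UNIV"
    by (simp add: tri_def[abs_def])
  then show ?thesis
    using nn_integral_has_integral_lborel[of "tri a b" 1] tri_nonneg[OF ab] by simp
qed

lemma tri_pair_nn_integral: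
  fixes j :: "'d::finite"
  assumes ab: "a < b"
  shows "(\<integral>\<^sup>+z. ennreal (if j = fst z then tri a b (snd z) else 0) \<partial>(count_space UNIV \<Otimes>\<^sub>M lborel)) = 1"
proof -
  have m: "(\<lambda>z::'d \<times> real. ennreal (if j = fst z then tri a b (snd z) else 0)) \<in> borel_measurable (count_space UNIV \<Otimes>\<^sub>M lborel)"
    by measurable
  have "(\<integral>\<^sup>+z. ennreal (if j = fst z then tri a b (snd z) else 0) \<partial>(count_space UNIV \<Otimes>\<^sub>M lborel))
     = (\<integral>\<^sup>+ i. \<integral>\<^sup>+ \<theta>. ennreal (if j = i then tri a b \<theta> else 0) \<partial>lborel \<partial>count_space UNIV)"
    using lborel.nn_integral_fst[OF m] by (simp only: fst_conv snd_conv)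
  also have "\<dots> = (\<integral>\<^sup>+ i. indicator {j} i \<partial>count_space UNIV)"
  proof (rule nn_integral_cong)
    fix i show "(\<integral>\<^sup>+ \<theta>. ennreal (if j = i then tri a b \<theta> else 0) \<partial>lborel) = indicator {j} i"
      by (cases "j = i") (simp_all add: tri_nn_integral[OF ab])
  qed
  also have "\<dots> = 1" by simp
  finally show ?thesis .
qed



lemma dens_measurable[measurable]:
  "(\<lambda>(i::'d::finite, \<theta>). ennreal (\<Sum>(j, a, b) \<in> W. ((b - a)\<^sup>2 / L) * (if j = i \<and> a \<le> \<theta> \<and> \<theta> \<le> b
                                    then 4 / (b - a)\<^sup>2 * min (\<theta> - a) (b - \<theta>) else 0)))
    \<in> borel_measurable (count_space UNIV \<Otimes>\<^sub>M lborel)"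
  by measurable

lemma dens_emeasure:
  fixes W :: "('d::finite \<times> real \<times> real) set"
  assumes W: "finite W" and L: "0 < L" and ab: "\<And>j a b. (j, a, b) \<in> W \<Longrightarrow> a < b"
    and S[measurable]: "S \<in> sets (count_space UNIV \<Otimes>\<^sub>M lborel)"
  shows "emeasure (density (count_space UNIV \<Otimes>\<^sub>M lborel) (\<lambda>(i, \<theta>). ennreal (\<Sum>(j, a, b) \<in> W.
         ((b - a)\<^sup>2 / L) * (if j = i \<and> a \<le> \<theta> \<and> \<theta> \<le> b
                                    then 4 / (b - a)\<^sup>2 * min (\<theta> - a) (b - \<theta>) else 0)))) S
    = (\<Sum>(j, a, b) \<in> W. ennreal ((b - a)\<^sup>2 / L) *
         (\<integral>\<^sup>+z. ennreal (if j = fst z then tri a b (snd z) else 0) * indicator S z \<partial>(count_space UNIV \<Otimes>\<^sub>M lborel)))"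
proof -
  have eq: "(\<lambda>(i, \<theta>). ennreal (\<Sum>(j, a, b) \<in> W.
         ((b - a)\<^sup>2 / L) * (if j = i \<and> a \<le> \<theta> \<and> \<theta> \<le> b
                                    then 4 / (b - a)\<^sup>2 * min (\<theta> - a) (b - \<theta>) else 0)))
     = (\<lambda>z. \<Sum>(j, a, b) \<in> W. ennreal ((b - a)\<^sup>2 / L) * ennreal (if j = fst z then tri a b (snd z) else 0))"
  proof
    fix z :: "'d \<times> real"
    obtain i \<theta> where z: "z = (i, \<theta>)" by (cases z)
    have "ennreal (\<Sum>(j, a, b) \<in> W. ((b - a)\<^sup>2 / L) * (if j = i \<and> a \<le> \<theta> \<and> \<theta> \<le> b
                                    then 4 / (b - a)\<^sup>2 * min (\<theta> - a) (b - \<theta>) else 0))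
        = ennreal (\<Sum>(j, a, b) \<in> W. ((b - a)\<^sup>2 / L) * (if j = i then tri a b \<theta> else 0))"
      by (rule arg_cong[where f=ennreal], rule sum.cong) (auto simp: tri_def)
    also have "\<dots> = (\<Sum>(j, a, b) \<in> W. ennreal ((b - a)\<^sup>2 / L) * ennreal (if j = i then tri a b \<theta> else 0))"
    proof (subst sum_ennreal[symmetric])
      fix I assume "I \<in> W"
      then obtain j a b where I: "I = (j, a, b)" "(j, a, b) \<in> W" by (cases I) auto
      have "0 \<le> tri a b \<theta>" using tri_nonneg[OF ab[OF I(2)]] .
      then show "0 \<le> (case I of (j, a, b) \<Rightarrow> (b - a)\<^sup>2 / L * (if j = i then tri a b \<theta> else 0))"
        using L by (simp add: I)
    next
      show "(\<Sum>I\<in>W. ennreal (case I of (j, a, b) \<Rightarrow> (b - a)\<^sup>2 / L * (if j = i then tri a b \<theta> else 0))) =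
             (\<Sum>(j, a, b)\<in>W. ennreal ((b - a)\<^sup>2 / L) * ennreal (if j = i then tri a b \<theta> else 0))"
      proof (rule sum.cong[OF refl])
        fix I assume "I \<in> W"
        then obtain j a b where I: "I = (j, a, b)" "(j, a, b) \<in> W" by (cases I) auto
        have "0 \<le> tri a b \<theta>" using tri_nonneg[OF ab[OF I(2)]] .
        then show "ennreal (case I of (j, a, b) \<Rightarrow> (b - a)\<^sup>2 / L * (if j = i then tri a b \<theta> else 0)) =
           (case I of (j, a, b) \<Rightarrow> ennreal ((b - a)\<^sup>2 / L) * ennreal (if j = i then tri a b \<theta> else 0))"
          using L by (simp add: I ennreal_mult[symmetric])
      qed
    qed
    finally have X: "ennreal (\<Sum>(j, a, b) \<in> W. ((b - a)\<^sup>2 / L) * (if j = i \<and> a \<le> \<theta> \<and> \<theta> \<le> b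
                                    then 4 / (b - a)\<^sup>2 * min (\<theta> - a) (b - \<theta>) else 0))
        = (\<Sum>(j, a, b) \<in> W. ennreal ((b - a)\<^sup>2 / L) * ennreal (if j = i then tri a b \<theta> else 0))" .
    show "(\<lambda>(i, \<theta>). ennreal (\<Sum>(j, a, b) \<in> W.
         ((b - a)\<^sup>2 / L) * (if j = i \<and> a \<le> \<theta> \<and> \<theta> \<le> b
                                    then 4 / (b - a)\<^sup>2 * min (\<theta> - a) (b - \<theta>) else 0))) z
       = (\<Sum>(j, a, b) \<in> W. ennreal ((b - a)\<^sup>2 / L) * ennreal (if j = fst z then tri a b (snd z) else 0))"
      unfolding z using X by (simp only: prod.case fst_conv snd_conv)
  qed
  show ?thesis
    apply (subst emeasure_density[OF _ S])
     apply measurable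
    apply (simp only: eq)
    apply (simp add: sum_distrib_right case_prod_beta)
    apply (subst nn_integral_sum)
     apply measurable
    apply (rule sum.cong[OF refl])
    apply (simp add: mult.assoc nn_integral_cmult)
    done
qed



lemma vec_fst_measurable[measurable]:
  "(\<lambda>z::('d::finite \<times> real). x $ fst z) \<in> borel_measurable (count_space UNIV \<Otimes>\<^sub>M borel)"
  by (rule measurable_compose[OF measurable_fst]) simp

lemma sep_measurable[measurable]:
  "{z. separates z x y} \<in> sets (count_space UNIV \<Otimes>\<^sub>M lborel)"
proof -
  have "{z. separates z x y} = {z \<in> space (count_space UNIV \<Otimes>\<^sub>M borel). min (x $ fst z) (y $ fst z) < snd z \<and> snd z < max (x $ fst z) (y $ fst z)}"
    by (auto simp: separates_def space_pair_measure)
  also have "\<dots> \<in> sets (count_space UNIV \<Otimes>\<^sub>M borel)" by measurable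
  finally show ?thesis by simp
qed

lemma space_UNIV_pair: "space (count_space UNIV \<Otimes>\<^sub>M lborel) = (UNIV :: ('d \<times> real) set)"
  by (simp add: space_pair_measure)

lemma dens_prob:
  fixes W :: "('d::finite \<times> real \<times> real) set"
  assumes W: "finite W" and L: "0 < L" and ab: "\<And>j a b. (j, a, b) \<in> W \<Longrightarrow> a < b"
    and Ld: "L = (\<Sum>(j, a, b) \<in> W. (b - a)\<^sup>2)"
  shows "prob_space (density (count_space UNIV \<Otimes>\<^sub>M lborel) (\<lambda>(i, \<theta>). ennreal (\<Sum>(j, a, b) \<in> W.
         ((b - a)\<^sup>2 / L) * (if j = i \<and> a \<le> \<theta> \<and> \<theta> \<le> b
                                    then 4 / (b - a)\<^sup>2 * min (\<theta> - a) (b - \<theta>) else 0))))"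
proof (rule prob_spaceI)
  have "emeasure (density (count_space UNIV \<Otimes>\<^sub>M lborel) (\<lambda>(i, \<theta>). ennreal (\<Sum>(j, a, b) \<in> W.
         ((b - a)\<^sup>2 / L) * (if j = i \<and> a \<le> \<theta> \<and> \<theta> \<le> b
                                    then 4 / (b - a)\<^sup>2 * min (\<theta> - a) (b - \<theta>) else 0)))) UNIV
    = (\<Sum>(j, a, b) \<in> W. ennreal ((b - a)\<^sup>2 / L) *
         (\<integral>\<^sup>+z. ennreal (if j = fst z then tri a b (snd z) else 0) * indicator UNIV z \<partial>(count_space UNIV \<Otimes>\<^sub>M lborel)))"
    apply (rule dens_emeasure[OF W L])
     apply (erule ab)
    apply (subst space_UNIV_pair[symmetric], rule sets.top)
    done
  also have "\<dots> = (\<Sum>(j, a, b) \<in> W. ennreal ((b - a)\<^sup>2 / L))"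
    by (rule sum.cong[OF refl]) (auto simp: tri_pair_nn_integral ab)
  also have "\<dots> = ennreal (\<Sum>(j, a, b) \<in> W. (b - a)\<^sup>2 / L)"
    using L by (subst sum_ennreal[symmetric]) (auto intro!: sum.cong)
  also have "(\<Sum>(j, a, b) \<in> W. (b - a)\<^sup>2 / L) = 1"
    using L unfolding Ld by (simp add: sum_divide_distrib[symmetric] case_prod_beta)
  finally show "emeasure (density (count_space UNIV \<Otimes>\<^sub>M lborel) (\<lambda>(i, \<theta>). ennreal (\<Sum>(j, a, b) \<in> W.
         ((b - a)\<^sup>2 / L) * (if j = i \<and> a \<le> \<theta> \<and> \<theta> \<le> b
                                    then 4 / (b - a)\<^sup>2 * min (\<theta> - a) (b - \<theta>) else 0)))) 
     (space (density (count_space UNIV \<Otimes>\<^sub>M lborel) (\<lambda>(i, \<theta>). ennreal (\<Sum>(j, a, b) \<in> W.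
         ((b - a)\<^sup>2 / L) * (if j = i \<and> a \<le> \<theta> \<and> \<theta> \<le> b
                                    then 4 / (b - a)\<^sup>2 * min (\<theta> - a) (b - \<theta>) else 0))))) = 1"
    by (simp add: space_pair_measure)
qed

lemma dens_lower:
  fixes W :: "('d::finite \<times> real \<times> real) set"
  assumes W: "finite W" and L: "0 < L" and ab: "\<And>j a b. (j, a, b) \<in> W \<Longrightarrow> a < b"
    and S[measurable]: "S \<in> sets (count_space UNIV \<Otimes>\<^sub>M lborel)"
    and W': "W' \<subseteq> W" and P: "\<And>j a b \<theta>. (j, a, b) \<in> W' \<Longrightarrow> a < \<theta> \<Longrightarrow> \<theta> < b \<Longrightarrow> (j, \<theta>) \<in> S"
  shows "ennreal (\<Sum>(j, a, b) \<in> W'. (b - a)\<^sup>2 / L) \<le> emeasure (density (count_space UNIV \<Otimes>\<^sub>M lborel) (\<lambda>(i, \<theta>). ennreal (\<Sum>(j, a, b) \<in> W.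
         ((b - a)\<^sup>2 / L) * (if j = i \<and> a \<le> \<theta> \<and> \<theta> \<le> b
                                    then 4 / (b - a)\<^sup>2 * min (\<theta> - a) (b - \<theta>) else 0)))) S"
proof -
  have "ennreal (\<Sum>(j, a, b) \<in> W'. (b - a)\<^sup>2 / L) = (\<Sum>(j, a, b) \<in> W'. ennreal ((b - a)\<^sup>2 / L))"
    using L by (subst sum_ennreal[symmetric]) (auto intro!: sum.cong)
  also have "\<dots> = (\<Sum>(j, a, b) \<in> W'. ennreal ((b - a)\<^sup>2 / L) *
         (\<integral>\<^sup>+z. ennreal (if j = fst z then tri a b (snd z) else 0) * indicator S z \<partial>(count_space UNIV \<Otimes>\<^sub>M lborel)))"
  proof (rule sum.cong[OF refl], clarify)
    fix j a b assume I: "(j, a, b) \<in> W'"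
    have "(\<integral>\<^sup>+z. ennreal (if j = fst z then tri a b (snd z) else 0) * indicator S z \<partial>(count_space UNIV \<Otimes>\<^sub>M lborel))
        = (\<integral>\<^sup>+z. ennreal (if j = fst z then tri a b (snd z) else 0) \<partial>(count_space UNIV \<Otimes>\<^sub>M lborel))"
    proof (rule nn_integral_cong)
      fix z :: "'d \<times> real"
      obtain i \<theta> where z: "z = (i, \<theta>)" by (cases z)
      show "ennreal (if j = fst z then tri a b (snd z) else 0) * indicator S z = ennreal (if j = fst z then tri a b (snd z) else 0)"
      proof (cases "j = i \<and> a < \<theta> \<and> \<theta> < b")
        case True
        then have "z \<in> S" using P[OF I] z by auto
        then show ?thesis by simp
      next
        case False
        then have "(if j = fst z then tri a b (snd z) else 0) = 0"
          by (auto simp: z tri_def)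
        then show ?thesis by simp
      qed
    qed
    also have "\<dots> = 1" using tri_pair_nn_integral ab I W' by blast
    finally show "ennreal ((b - a)\<^sup>2 / L) = ennreal ((b - a)\<^sup>2 / L) *
         (\<integral>\<^sup>+z. ennreal (if j = fst z then tri a b (snd z) else 0) * indicator S z \<partial>(count_space UNIV \<Otimes>\<^sub>M lborel))"
      by simp
  qed
  also have "\<dots> \<le> (\<Sum>(j, a, b) \<in> W. ennreal ((b - a)\<^sup>2 / L) *
         (\<integral>\<^sup>+z. ennreal (if j = fst z then tri a b (snd z) else 0) * indicator S z \<partial>(count_space UNIV \<Otimes>\<^sub>M lborel)))"
    by (rule sum_mono2[OF W W']) auto
  also have "\<dots> = emeasure (density (count_space UNIV \<Otimes>\<^sub>M lborel) (\<lambda>(i, \<theta>). ennreal (\<Sum>(j, a, b) \<in> W.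
         ((b - a)\<^sup>2 / L) * (if j = i \<and> a \<le> \<theta> \<and> \<theta> \<le> b
                                    then 4 / (b - a)\<^sup>2 * min (\<theta> - a) (b - \<theta>) else 0)))) S"
    by (rule dens_emeasure[OF W L ab S, symmetric])
  finally show ?thesis .
qed



definition cons :: "real set \<Rightarrow> (real \<times> real) set" where
  "cons B = {(a, b). a \<in> B \<and> b \<in> B \<and> a < b \<and> \<not> (\<exists>p \<in> B. a < p \<and> p < b)}"

lemma Iv_cons: "Iv i V x y = cons (breakpts i V x y)"
  by (simp add: Iv_def cons_def)

lemma cons_subset: "cons B \<subseteq> B \<times> B"
  by (auto simp: cons_def)

lemma finite_cons: "finite B \<Longrightarrow> finite (cons B)"
  by (rule finite_subset[OF cons_subset]) simp

lemma cons_lt: "(a, b) \<in> cons B \<Longrightarrow> a < b"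
  by (simp add: cons_def)

lemma cons_empty[simp]: "cons {} = {}"
  by (simp add: cons_def)

lemma cons_single: "cons {m} = {}"
  by (auto simp: cons_def)

lemma cons_insert_max:
  assumes B: "finite B" and m: "\<forall>a\<in>B. a < m"
  shows "cons (insert m B) = (if B = {} then {} else insert (Max B, m) (cons B))"
proof (cases "B = {}")
  case True
  then show ?thesis by (auto simp: cons_def)
next
  case False
  have MB: "Max B \<in> B" "\<And>p. p \<in> B \<Longrightarrow> p \<le> Max B" using B False by auto
  have "cons (insert m B) = insert (Max B, m) (cons B)"
  proof (intro equalityI subsetI)
    fix z assume z: "z \<in> cons (insert m B)"
    obtain a b where ab: "z = (a, b)" by (cases z)
    show "z \<in> insert (Max B, m) (cons B)"
    proof (cases "b = m")
      case True
      have a: "a \<in> B" "a < m" using z ab True by (auto simp: cons_def)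
      have "a = Max B"
      proof (rule ccontr)
        assume "a \<noteq> Max B"
        then have "a < Max B" using MB(2)[OF a(1)] by simp
        then show False using z ab True MB m by (auto simp: cons_def)
      qed
      then show ?thesis using ab True by simp
    next
      case False
      then have "b \<in> B" "a < b" using z ab by (auto simp: cons_def)
      then have "a \<in> B" using z ab m by (auto simp: cons_def)
      then show ?thesis using z ab \<open>b \<in> B\<close> by (auto simp: cons_def)
    qed
  next
    fix z assume z: "z \<in> insert (Max B, m) (cons B)"
    show "z \<in> cons (insert m B)"
    proof (cases "z = (Max B, m)")
      case True
      then show ?thesis using MB m by (force simp: cons_def)
    next
      case False
      then have "z \<in> cons B" using z by simp
      then show ?thesis using m by (force simp: cons_def)
    qed
  qed
  then show ?thesis using False by simp
qed

lemma cons_sum_len: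
  "finite B \<Longrightarrow> B \<noteq> {} \<Longrightarrow> (\<Sum>(a, b) \<in> cons B. b - a) = Max B - Min B"
proof (induction B rule: finite_linorder_max_induct)
  case empty
  then show ?case by simp
next
  case (insert m B)
  show ?case
  proof (cases "B = {}")
    case True
    show ?thesis unfolding True by (simp add: cons_single)
  next
    case False
    have nin: "(Max B, m) \<notin> cons B" using cons_subset[of B] insert by auto
    have "(\<Sum>(a, b) \<in> cons (insert m B). b - a) = (m - Max B) + (\<Sum>(a, b) \<in> cons B. b - a)"
      using cons_insert_max[OF insert(1,2)] False nin finite_cons[OF insert(1)] by simp
    also have "\<dots> = m - Min B" using insert False by simp
    also have "Max (insert m B) = m" using insert False by (auto intro!: Max_eqI)
    moreover have "Min (insert m B) = Min B"
    proof -
      have mi: "Min B \<in> B" using insert(1) False by simp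
      have lt: "Min B < m" using insert(2) mi by blast
      have "Min (insert m B) = min m (Min B)" using insert(1) False by (rule Min_insert)
      then show ?thesis using lt by simp
    qed
    ultimately show ?thesis by simp
  qed
qed

lemma cons_card:
  "finite B \<Longrightarrow> card (cons B) = card B - 1"
proof (induction B rule: finite_linorder_max_induct)
  case empty
  then show ?case by simp
next
  case (insert m B)
  show ?case
  proof (cases "B = {}")
    case True
    show ?thesis unfolding True by (simp add: cons_single)
  next
    case False
    have nin: "(Max B, m) \<notin> cons B" using cons_subset[of B] insert by auto
    have "m \<notin> B" using insert by auto
    have "card B > 0" using False insert by (simp add: card_gt_0_iff)
    then show ?thesis
      using cons_insert_max[OF insert(1,2)] False nin finite_cons[OF insert(1)] insert \<open>m \<notin> B\<close> by simp
  qed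
qed

lemma cons_restrict:
  "cons {p \<in> B. lo \<le> p \<and> p \<le> hi} = {(a, b) \<in> cons B. lo \<le> a \<and> b \<le> hi}"
  unfolding cons_def by auto



lemma norm_sq: "(norm (x - y))\<^sup>2 = (\<Sum>i\<in>UNIV. (x $ i - y $ i)\<^sup>2)" for x y :: "real ^ 'd::finite"
  unfolding power2_norm_eq_inner by (simp add: inner_vec_def power2_eq_square)

lemma breakpts_sub:
  assumes "x \<in> V" "y \<in> V"
  shows "breakpts i V (x $ i) (y $ i) = {p \<in> (\<lambda>v. v $ i) ` V. min (x $ i) (y $ i) \<le> p \<and> p \<le> max (x $ i) (y $ i)}"
  using assms by (auto simp: breakpts_def)

lemma breakpts_full:
  assumes "finite V" "V \<noteq> {}"
  shows "breakpts i V (Min ((\<lambda>v. v $ i) ` V)) (Max ((\<lambda>v. v $ i) ` V)) = (\<lambda>v. v $ i) ` V"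
proof -
  let ?P = "(\<lambda>v. v $ i) ` V"
  have f: "finite ?P" "?P \<noteq> {}" using assms by auto
  have "Min ?P \<in> ?P" "Max ?P \<in> ?P" using Min_in[OF f] Max_in[OF f] by auto
  moreover have "\<And>p. p \<in> ?P \<Longrightarrow> Min ?P \<le> p \<and> p \<le> Max ?P" using f by auto
  ultimately show ?thesis unfolding breakpts_def by auto
qed

lemma Idim_cons:
  assumes "finite V" "V \<noteq> {}"
  shows "Idim i V = cons ((\<lambda>v. v $ i) ` V)"
  using assms by (simp add: Idim_def Iv_cons breakpts_full)

lemma Iv_sub:
  assumes "finite V" "x \<in> V" "y \<in> V"
  shows "Iv i V (x $ i) (y $ i) = {(a, b) \<in> Idim i V. min (x $ i) (y $ i) \<le> a \<and> b \<le> max (x $ i) (y $ i)}"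
proof -
  have "V \<noteq> {}" using assms by auto
  then show ?thesis using assms by (simp add: Iv_cons breakpts_sub Idim_cons cons_restrict)
qed

lemma Iv_finite: "finite V \<Longrightarrow> finite (Iv i V x y)"
  unfolding Iv_cons by (rule finite_cons) (simp add: breakpts_def)

lemma Idim_finite: "finite V \<Longrightarrow> finite (Idim i V)"
  unfolding Idim_def by (rule Iv_finite)

lemma Iall_Sigma: "Iall V = Sigma UNIV (\<lambda>i. Idim i V)"
  by (auto simp: Iall_def)

lemma Iall_finite: "finite V \<Longrightarrow> finite (Iall V)"
  unfolding Iall_Sigma by (auto intro: Idim_finite)

lemma Iall_lt: "(i, a, b) \<in> Iall V \<Longrightarrow> a < b"
  by (auto simp: Iall_def Idim_def Iv_def)

lemma Iv_len_sum:
  assumes "finite V" "x \<in> V" "y \<in> V"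
  shows "(\<Sum>(a, b) \<in> Iv i V (x $ i) (y $ i). b - a) = \<bar>x $ i - y $ i\<bar>"
proof -
  let ?B = "breakpts i V (x $ i) (y $ i)"
  have fin: "finite ?B" using assms by (simp add: breakpts_def)
  have ne: "?B \<noteq> {}" by (simp add: breakpts_def)
  have mx: "Max ?B = max (x $ i) (y $ i)"
    using fin by (intro Max_eqI) (auto simp: breakpts_def)
  have mn: "Min ?B = min (x $ i) (y $ i)"
    using fin by (intro Min_eqI) (auto simp: breakpts_def)
  show ?thesis unfolding Iv_cons using cons_sum_len[OF fin ne] mx mn by simp
qed

lemma Iv_card:
  assumes "finite V" "x \<in> V" "y \<in> V"
  shows "card (Iv i V (x $ i) (y $ i)) \<le> card V - 1"
proof -
  let ?B = "breakpts i V (x $ i) (y $ i)"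
  have "?B \<subseteq> (\<lambda>v. v $ i) ` V" using assms by (auto simp: breakpts_def)
  then have "card ?B \<le> card ((\<lambda>v. v $ i) ` V)" using assms by (intro card_mono) auto
  also have "\<dots> \<le> card V" using assms by (intro card_image_le) auto
  finally have "card ?B \<le> card V" .
  moreover have "finite ?B" using assms by (simp add: breakpts_def)
  ultimately show ?thesis unfolding Iv_cons by (simp add: cons_card)
qed

lemma Iv_sq_upper:
  assumes "finite V" "x \<in> V" "y \<in> V"
  shows "(\<Sum>(a, b) \<in> Iv i V (x $ i) (y $ i). (b - a)\<^sup>2) \<le> (x $ i - y $ i)\<^sup>2"
proof -
  let ?I = "Iv i V (x $ i) (y $ i)"
  have lt: "\<And>a b. (a, b) \<in> ?I \<Longrightarrow> a < b" by (auto simp: Iv_def)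
  have le: "\<And>a b. (a, b) \<in> ?I \<Longrightarrow> b - a \<le> \<bar>x $ i - y $ i\<bar>"
  proof -
    fix a b assume ab: "(a, b) \<in> ?I"
    have "b - a = (\<Sum>z \<in> {(a, b)}. (case z of (a, b) \<Rightarrow> b - a))" by simp
    also have "\<dots> \<le> (\<Sum>(a, b) \<in> ?I. b - a)"
      using ab Iv_finite[OF assms(1)] by (intro sum_mono2) (fastforce dest: lt)+
    finally show "b - a \<le> \<bar>x $ i - y $ i\<bar>" using Iv_len_sum[OF assms] by simp
  qed
  have "(\<Sum>(a, b) \<in> ?I. (b - a)\<^sup>2) \<le> (\<Sum>(a, b) \<in> ?I. (b - a) * \<bar>x $ i - y $ i\<bar>)"
    using lt le by (intro sum_mono) (auto simp: power2_eq_square intro!: mult_left_mono dest: lt less_imp_le)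
  also have "\<dots> = \<bar>x $ i - y $ i\<bar> * \<bar>x $ i - y $ i\<bar>"
    using Iv_len_sum[OF assms] by (simp add: sum_distrib_right[symmetric] case_prod_beta mult.commute)
  finally show ?thesis by (simp add: power2_eq_square)
qed

lemma Iv_sq_lower:
  assumes "finite V" "x \<in> V" "y \<in> V"
  shows "(x $ i - y $ i)\<^sup>2 \<le> real (card V - 1) * (\<Sum>(a, b) \<in> Iv i V (x $ i) (y $ i). (b - a)\<^sup>2)"
proof -
  let ?I = "Iv i V (x $ i) (y $ i)"
  have "(x $ i - y $ i)\<^sup>2 = (\<Sum>z \<in> ?I. (case z of (a, b) \<Rightarrow> b - a))\<^sup>2"
    using Iv_len_sum[OF assms] by simp
  also have "\<dots> \<le> (\<Sum>z \<in> ?I. (case z of (a, b) \<Rightarrow> b - a)\<^sup>2) * real (card ?I)"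
    by (rule sum_squared_le_sum_of_squares)
  also have "\<dots> \<le> (\<Sum>z \<in> ?I. (case z of (a, b) \<Rightarrow> b - a)\<^sup>2) * real (card V - 1)"
    using Iv_card[OF assms] by (intro mult_left_mono) (auto intro: sum_nonneg)
  finally show ?thesis by (simp add: mult.commute case_prod_beta)
qed

lemma d2_upper:
  assumes "finite V" "x \<in> V" "y \<in> V"
  shows "d2 V x y \<le> (norm (x - y))\<^sup>2"
  unfolding d2_def norm_sq using Iv_sq_upper[OF assms] by (intro sum_mono) simp

lemma d2_lower:
  assumes "finite V" "x \<in> V" "y \<in> V"
  shows "(norm (x - y))\<^sup>2 \<le> real (card V - 1) * d2 V x y"
proof -
  have "(norm (x - y))\<^sup>2 \<le> (\<Sum>i\<in>UNIV. real (card V - 1) * (\<Sum>(a, b) \<in> Iv i V (x $ i) (y $ i). (b - a)\<^sup>2))"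
    unfolding norm_sq by (rule sum_mono) (rule Iv_sq_lower[OF assms])
  also have "\<dots> = real (card V - 1) * d2 V x y"
    unfolding d2_def by (rule sum_distrib_left[symmetric])
  finally show ?thesis .
qed



lemma Delta_ge:
  assumes "finite V" "u \<in> V" "v \<in> V"
  shows "(norm (u - v))\<^sup>2 \<le> Delta V"
proof -
  have "{(norm (x - y))\<^sup>2 | x y. x \<in> V \<and> y \<in> V} = (\<lambda>(x, y). (norm (x - y))\<^sup>2) ` (V \<times> V)" by auto
  then have fin: "finite {(norm (x - y))\<^sup>2 | x y. x \<in> V \<and> y \<in> V}" using assms by simp
  show ?thesis unfolding Delta_def by (rule Max_ge[OF fin]) (use assms in blast)
qed

lemma Delta_attained:
  assumes "finite V" "V \<noteq> {}"
  shows "\<exists>x\<in>V. \<exists>y\<in>V. Delta V = (norm (x - y))\<^sup>2"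
proof -
  have "{(norm (x - y))\<^sup>2 | x y. x \<in> V \<and> y \<in> V} = (\<lambda>(x, y). (norm (x - y))\<^sup>2) ` (V \<times> V)" by auto
  then have fin: "finite {(norm (x - y))\<^sup>2 | x y. x \<in> V \<and> y \<in> V}" using assms by simp
  have ne: "{(norm (x - y))\<^sup>2 | x y. x \<in> V \<and> y \<in> V} \<noteq> {}" using assms by auto
  show ?thesis using Max_in[OF fin ne] unfolding Delta_def by auto
qed

lemma Delta_pos:
  assumes "finite V" "card V \<ge> 2"
  shows "Delta V > 0"
proof -
  obtain u v where uv: "u \<in> V" "v \<in> V" "u \<noteq> v"
    using assms by (metis card_2_iff' card_le_Suc_iff numeral_2_eq_2 obtain_subset_with_card_n subset_iff)
  have "0 < (norm (u - v))\<^sup>2" using uv by simp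
  also have "\<dots> \<le> Delta V" by (rule Delta_ge[OF assms(1) uv(1,2)])
  finally show ?thesis .
qed

lemma far_pos:
  assumes "finite V" "card V \<ge> 2" "far V x y"
  shows "(norm (x - y))\<^sup>2 > 0"
  using Delta_pos[OF assms(1,2)] assms(3) unfolding far_def by linarith

lemma far_exists:
  assumes "finite V" "card V \<ge> 2"
  shows "\<exists>x\<in>V. \<exists>y\<in>V. far V x y"
proof -
  have "V \<noteq> {}" using assms by auto
  then obtain x y where "x \<in> V" "y \<in> V" "Delta V = (norm (x - y))\<^sup>2" using Delta_attained assms by blast
  moreover have "Delta V > 0" using Delta_pos assms by blast
  ultimately show ?thesis unfolding far_def by (intro bexI[of _ x] bexI[of _ y]) auto
qed

lemma far_set_finite:
  assumes "finite V"
  shows "finite {stretch V x y | x y. x \<in> V \<and> y \<in> V \<and> far V x y}"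
proof -
  have "{stretch V x y | x y. x \<in> V \<and> y \<in> V \<and> far V x y} \<subseteq> (\<lambda>(x, y). stretch V x y) ` (V \<times> V)" by auto
  then show ?thesis using assms by (meson finite_SigmaI finite_imageI finite_subset)
qed

lemma stretch_le_s:
  assumes "finite V" "x \<in> V" "y \<in> V" "far V x y"
  shows "stretch V x y \<le> s_max V"
  unfolding s_max_def by (rule Max_ge[OF far_set_finite[OF assms(1)]]) (use assms in blast)

lemma d2_pos_far:
  assumes "finite V" "card V \<ge> 2" "x \<in> V" "y \<in> V" "far V x y"
  shows "d2 V x y > 0"
proof -
  have "0 < (norm (x - y))\<^sup>2" by (rule far_pos[OF assms(1,2,5)])
  also have "\<dots> \<le> real (card V - 1) * d2 V x y" by (rule d2_lower[OF assms(1,3,4)])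
  finally have "0 < real (card V - 1) * d2 V x y" .
  moreover have "real (card V - 1) \<ge> 0" by simp
  ultimately show ?thesis by (simp add: zero_less_mult_iff)
qed

lemma stretch_bounds:
  assumes "finite V" "card V \<ge> 2" "x \<in> V" "y \<in> V" "far V x y"
  shows "0 < stretch V x y" "stretch V x y \<le> real (card V - 1)"
proof -
  have d: "d2 V x y > 0" by (rule d2_pos_far[OF assms])
  have n: "0 < (norm (x - y))\<^sup>2" by (rule far_pos[OF assms(1,2,5)])
  show "0 < stretch V x y" unfolding stretch_def using d n by simp
  show "stretch V x y \<le> real (card V - 1)" unfolding stretch_def
    using d d2_lower[OF assms(1,3,4)] by (simp add: divide_le_eq)
qed

lemma s_max_bounds:
  assumes "finite V" "card V \<ge> 2"
  shows "0 < s_max V" "s_max V \<le> real (card V - 1)"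
proof -
  have ne: "{stretch V x y | x y. x \<in> V \<and> y \<in> V \<and> far V x y} \<noteq> {}"
    using far_exists[OF assms] by blast
  obtain x y where xy: "x \<in> V" "y \<in> V" "far V x y" "s_max V = stretch V x y"
    using Max_in[OF far_set_finite[OF assms(1)] ne] unfolding s_max_def by auto
  show "0 < s_max V" "s_max V \<le> real (card V - 1)" using stretch_bounds[OF assms xy(1-3)] xy(4) by auto
qed

definition Tset :: "'d::finite point set \<Rightarrow> 'd point \<Rightarrow> 'd point \<Rightarrow> ('d \<times> real \<times> real) set" where
  "Tset V x y = Sigma UNIV (\<lambda>i. Iv i V (x $ i) (y $ i))"

lemma Tset_finite: "finite V \<Longrightarrow> finite (Tset V x y)"
  unfolding Tset_def by (auto intro: Iv_finite)

lemma d2_Tset: "finite V \<Longrightarrow> d2 V x y = (\<Sum>(i, a, b) \<in> Tset V x y. (b - a)\<^sup>2)"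
  unfolding d2_def Tset_def by (subst sum.Sigma) (auto intro: Iv_finite simp: case_prod_beta)

lemma Tset_sub: "finite V \<Longrightarrow> x \<in> V \<Longrightarrow> y \<in> V \<Longrightarrow> Tset V x y \<subseteq> Iall V"
  unfolding Tset_def Iall_Sigma using Iv_sub by fastforce

lemma R_sub: "finite V \<Longrightarrow> R k V \<subseteq> (\<Union>c \<in> {(u, v) \<in> V \<times> V. close k V u v}. Tset V (fst c) (snd c))"
proof
  fix I assume fin: "finite V" and I: "I \<in> R k V"
  obtain i a b where Ie: "I = (i, a, b)" by (cases I) auto
  obtain u v where uv: "u \<in> V" "v \<in> V" "close k V u v" "min (u $ i) (v $ i) \<le> a" "b \<le> max (u $ i) (v $ i)"
    and Ia: "(i, a, b) \<in> Iall V"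
    using I unfolding Ie R_def by blast
  have "(a, b) \<in> Idim i V" using Ia by (simp add: Iall_def)
  then have "(a, b) \<in> Iv i V (u $ i) (v $ i)" using Iv_sub[OF fin uv(1,2)] uv(4,5) by simp
  then show "I \<in> (\<Union>c \<in> {(u, v) \<in> V \<times> V. close k V u v}. Tset V (fst c) (snd c))"
    using uv Ie by (auto simp: Tset_def intro!: bexI[of _ "(u, v)"])
qed

lemma sum_UN_le_nonneg:
  fixes f :: "'a \<Rightarrow> real"
  assumes "finite C" "\<And>c. c \<in> C \<Longrightarrow> finite (T c)" "\<And>x. 0 \<le> f x"
  shows "sum f (\<Union>c\<in>C. T c) \<le> (\<Sum>c\<in>C. sum f (T c))"
  using assms
proof (induction C rule: finite_induct)
  case empty
  then show ?case by simp
next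
  case (insert c C)
  have fU: "finite (\<Union>c\<in>C. T c)" using insert by auto
  have fc: "finite (T c)" using insert by auto
  have "sum f (\<Union>c\<in>insert c C. T c) = sum f (T c \<union> (\<Union>c\<in>C. T c))" by simp
  also have "\<dots> = sum f (T c) + sum f (\<Union>c\<in>C. T c) - sum f (T c \<inter> (\<Union>c\<in>C. T c))"
    by (rule sum_Un[OF fc fU])
  also have "\<dots> \<le> sum f (T c) + sum f (\<Union>c\<in>C. T c)"
    using insert(5) by (simp add: sum_nonneg)
  also have "\<dots> \<le> sum f (T c) + (\<Sum>c\<in>C. sum f (T c))"
    using insert by simp
  finally show ?case using insert by simp
qed

lemma R_sum_bound:
  assumes fin: "finite V" and k: "k \<ge> 1" and ne: "V \<noteq> {}"
  shows "(\<Sum>(i, a, b) \<in> R k V. (b - a)\<^sup>2) \<le> real (card V)^2 * Delta V / real k ^ 4"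
proof -
  let ?C = "{(u, v) \<in> V \<times> V. close k V u v}"
  let ?f = "\<lambda>(i::'a, a::real, b::real). (b - a)\<^sup>2"
  have fC: "finite ?C" by (rule finite_subset[of _ "V \<times> V"]) (use fin in auto)
  have "sum ?f (R k V) \<le> sum ?f (\<Union>c \<in> ?C. Tset V (fst c) (snd c))"
    using R_sub[OF fin] fC fin by (intro sum_mono2) (auto intro: Tset_finite)
  also have "\<dots> \<le> (\<Sum>c\<in>?C. sum ?f (Tset V (fst c) (snd c)))"
    by (rule sum_UN_le_nonneg[OF fC]) (auto intro: Tset_finite fin)
  also have "\<dots> = (\<Sum>c\<in>?C. d2 V (fst c) (snd c))"
    by (rule sum.cong[OF refl]) (simp add: d2_Tset[OF fin])
  also have "\<dots> \<le> (\<Sum>c\<in>?C. Delta V / real k ^ 4)"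
  proof (rule sum_mono)
    fix c assume c: "c \<in> ?C"
    then have "d2 V (fst c) (snd c) \<le> (norm (fst c - snd c))\<^sup>2" using d2_upper[OF fin] by auto
    also have "\<dots> < Delta V / real k ^ 4" using c by (auto simp: close_def)
    finally show "d2 V (fst c) (snd c) \<le> Delta V / real k ^ 4" by simp
  qed
  also have "\<dots> = real (card ?C) * (Delta V / real k ^ 4)" by simp
  also have "\<dots> \<le> real (card V)^2 * (Delta V / real k ^ 4)"
  proof (rule mult_right_mono)
    have "card ?C \<le> card (V \<times> V)" using fin by (intro card_mono) auto
    then have "card ?C \<le> card V * card V" by (simp add: card_cartesian_product)
    then have "real (card ?C) \<le> real (card V * card V)" by (simp only: of_nat_le_iff)
    then show "real (card ?C) \<le> real (card V)^2" by (simp add: power2_eq_square)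
    show "0 \<le> Delta V / real k ^ 4"
    proof -
      obtain u where "u \<in> V" using ne by auto
      then have "0 \<le> Delta V" using Delta_ge[OF fin, of u u] by simp
      then show ?thesis by simp
    qed
  qed
  finally show ?thesis by simp
qed



lemma R_finite: "finite V \<Longrightarrow> finite (R k V)"
  by (rule finite_subset[OF _ Iall_finite]) (auto simp: R_def)

lemma good_mass:
  assumes fin: "finite V" and c2: "card V \<ge> 2" and ck: "card V \<le> k"
    and xy: "x \<in> V" "y \<in> V" "far V x y"
  shows "Delta V / (4 * s_max V) \<le> (\<Sum>(i, a, b) \<in> Tset V x y - R k V. (b - a)\<^sup>2)"
proof -
  let ?f = "\<lambda>(i::'a, a::real, b::real). (b - a)\<^sup>2"
  define s where "s = s_max V"
  define D where "D = Delta V"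
  have s0: "0 < s" and s1: "s \<le> real (card V - 1)" using s_max_bounds[OF fin c2] by (auto simp: s_def)
  have D0: "0 < D" using Delta_pos[OF fin c2] by (simp add: D_def)
  have dpos: "0 < d2 V x y" by (rule d2_pos_far[OF fin c2 xy])
  have "stretch V x y \<le> s" using stretch_le_s[OF fin xy] by (simp add: s_def)
  then have "(norm (x - y))\<^sup>2 \<le> s * d2 V x y" using dpos by (simp add: stretch_def divide_le_eq)
  moreover have "D / 2 \<le> (norm (x - y))\<^sup>2" using xy(3) by (simp add: far_def D_def)
  ultimately have "D / 2 \<le> s * d2 V x y" by linarith
  then have d2low: "D / (2 * s) \<le> d2 V x y" using s0 by (simp add: divide_le_eq mult.commute mult.left_commute)
  have k2: "(2::real) \<le> real k" using c2 ck by linarith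
  have kpos: "0 < real k" using k2 by linarith
  have "sum ?f (R k V) \<le> real (card V)^2 * D / real k ^ 4"
  proof -
    have ne: "V \<noteq> {}" using c2 by auto
    have "k \<ge> 1" using c2 ck by linarith
    then show ?thesis using R_sum_bound[OF fin _ ne, of k] by (simp add: D_def)
  qed
  also have "\<dots> \<le> real k ^ 2 * D / real k ^ 4"
    using D0 ck by (intro divide_right_mono mult_right_mono power_mono) auto
  also have "\<dots> = D / real k ^ 2"
    using kpos by (simp add: field_simps eval_nat_numeral)
  also have "\<dots> \<le> D / (4 * s)"
  proof (rule divide_left_mono)
    have "4 * s \<le> 4 * (real k - 1)" using s1 ck c2 by (simp add: of_nat_diff)
    also have "\<dots> \<le> real k ^ 2"
    proof -
      have e: "(real k - 2)^2 = real k ^ 2 - 4 * real k + 4" by (simp add: power2_eq_square algebra_simps)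
      have "0 \<le> (real k - 2)^2" by simp
      then show ?thesis using e by (simp add: algebra_simps)
    qed
    finally show "4 * s \<le> real k ^ 2" .
    show "0 \<le> D" using D0 by simp
    show "0 < real k ^ 2 * (4 * s)" using kpos s0 by simp
  qed
  finally have Rb: "sum ?f (R k V) \<le> D / (4 * s)" .
  have fT: "finite (Tset V x y)" by (rule Tset_finite[OF fin])
  have "sum ?f (Tset V x y - R k V) = sum ?f (Tset V x y - (Tset V x y \<inter> R k V))" by (rule arg_cong[where f="sum ?f"]) blast
  also have "\<dots> = sum ?f (Tset V x y) - sum ?f (Tset V x y \<inter> R k V)"
    by (rule sum_diff[OF fT]) auto
  finally have eq: "sum ?f (Tset V x y - R k V) = sum ?f (Tset V x y) - sum ?f (Tset V x y \<inter> R k V)" .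
  have "sum ?f (Tset V x y \<inter> R k V) \<le> sum ?f (R k V)"
    by (rule sum_mono2[OF R_finite[OF fin]]) auto
  with eq have "sum ?f (Tset V x y) - sum ?f (R k V) \<le> sum ?f (Tset V x y - R k V)" by simp
  moreover have "sum ?f (Tset V x y) = d2 V x y" by (simp add: d2_Tset[OF fin])
  moreover have "D / (2 * s) - D / (4 * s) = D / (4 * s)" using s0 by (simp add: field_simps)
  ultimately show ?thesis using d2low Rb by (simp add: D_def s_def)
qed



lemma L2'_eq: "L2' k V = (\<Sum>(i, a, b) \<in> Iall V - R k V. (b - a)\<^sup>2)"
  by (simp add: L2'_def)

lemma far_sep_mass:
  assumes fin: "finite V" and c2: "card V \<ge> 2" and ck: "card V \<le> k"
    and xy: "x \<in> V" "y \<in> V" "far V x y"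
  shows "Delta V / (4 * s_max V) \<le> L2' k V"
    "Delta V / (4 * s_max V * L2 V) \<le> (\<Sum>(j, a, b) \<in> Tset V x y - R k V. (b - a)\<^sup>2 / L2' k V)"
    "Tset V x y - R k V \<subseteq> Iall V - R k V"
    "0 < L2' k V"
proof -
  let ?f = "\<lambda>(i::'a, a::real, b::real). (b - a)\<^sup>2"
  have gm: "Delta V / (4 * s_max V) \<le> sum ?f (Tset V x y - R k V)" by (rule good_mass[OF assms])
  show sub: "Tset V x y - R k V \<subseteq> Iall V - R k V" using Tset_sub[OF fin xy(1,2)] by blast
  have "sum ?f (Tset V x y - R k V) \<le> sum ?f (Iall V - R k V)"
    by (rule sum_mono2[OF _ sub]) (auto intro: Iall_finite fin)
  then show L1: "Delta V / (4 * s_max V) \<le> L2' k V" using gm by (simp add: L2'_def)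
  have pos: "0 < Delta V / (4 * s_max V)" using Delta_pos[OF fin c2] s_max_bounds[OF fin c2] by simp
  then show Lp: "0 < L2' k V" using L1 by linarith
  have LL: "L2' k V \<le> L2 V"
    unfolding L2'_def L2_def by (rule sum_mono2) (auto intro: Iall_finite fin)
  have "Delta V / (4 * s_max V * L2 V) = (Delta V / (4 * s_max V)) / L2 V" by simp
  also have "\<dots> \<le> (Delta V / (4 * s_max V)) / L2' k V"
    using pos Lp LL by (intro divide_left_mono) auto
  also have "\<dots> \<le> sum ?f (Tset V x y - R k V) / L2' k V"
    using gm Lp by (intro divide_right_mono) auto
  also have "\<dots> = (\<Sum>(j, a, b) \<in> Tset V x y - R k V. (b - a)\<^sup>2 / L2' k V)"
    by (simp add: sum_divide_distrib case_prod_beta)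
  finally show "Delta V / (4 * s_max V * L2 V) \<le> (\<Sum>(j, a, b) \<in> Tset V x y - R k V. (b - a)\<^sup>2 / L2' k V)" .
qed

lemma D2'_facts:
  assumes fin: "finite V" and c2: "card V \<ge> 2" and ck: "card V \<le> k"
  shows "prob_space (D2' k V)"
    "\<And>x y. x \<in> V \<Longrightarrow> y \<in> V \<Longrightarrow> far V x y \<Longrightarrow>
       ennreal (Delta V / (4 * s_max V * L2 V)) \<le> emeasure (D2' k V) {z. separates z x y}"
proof -
  obtain x0 y0 where xy0: "x0 \<in> V" "y0 \<in> V" "far V x0 y0" using far_exists[OF fin c2] by blast
  have Lp: "0 < L2' k V" using far_sep_mass(4)[OF fin c2 ck xy0] .
  have fW: "finite (Iall V - R k V)" using Iall_finite[OF fin] by simp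
  have ab: "\<And>j a b. (j, a, b) \<in> Iall V - R k V \<Longrightarrow> a < b" using Iall_lt by blast
  show "prob_space (D2' k V)"
    unfolding D2'_def by (rule dens_prob[OF fW Lp ab L2'_eq])
  fix x y assume xy: "x \<in> V" "y \<in> V" "far V x y"
  have P: "\<And>j a b \<theta>. (j, a, b) \<in> Tset V x y - R k V \<Longrightarrow> a < \<theta> \<Longrightarrow> \<theta> < b \<Longrightarrow> (j, \<theta>) \<in> {z. separates z x y}"
  proof -
    fix j a b \<theta> assume I: "(j, a, b) \<in> Tset V x y - R k V" "a < \<theta>" "\<theta> < b"
    then have "(a, b) \<in> Iv j V (x $ j) (y $ j)" by (simp add: Tset_def)
    then have "min (x $ j) (y $ j) \<le> a" "b \<le> max (x $ j) (y $ j)" using Iv_sub[OF fin xy(1,2)] by auto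
    then show "(j, \<theta>) \<in> {z. separates z x y}" using I by (simp add: separates_def)
  qed
  have "ennreal (Delta V / (4 * s_max V * L2 V)) \<le> ennreal (\<Sum>(j, a, b) \<in> Tset V x y - R k V. (b - a)\<^sup>2 / L2' k V)"
    using far_sep_mass(2)[OF fin c2 ck xy] by (rule ennreal_leI)
  also have "\<dots> \<le> emeasure (D2' k V) {z. separates z x y}"
    unfolding D2'_def
    by (rule dens_lower[OF fW Lp ab sep_measurable far_sep_mass(3)[OF fin c2 ck xy] P])
  finally show "ennreal (Delta V / (4 * s_max V * L2 V)) \<le> emeasure (D2' k V) {z. separates z x y}" .
qed



lemma tail_sum:
  fixes p m :: real
  assumes p0: "0 < p" and p1: "p \<le> 1" and m1: "1 \<le> m"
  shows "(\<Sum>t. ennreal (min 1 (m * (1 - p) ^ t))) \<le> ennreal ((ln m + 2) / p)"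
proof -
  define q where "q = 1 - p"
  have q0: "0 \<le> q" and q1: "q < 1" using p0 p1 by (auto simp: q_def)
  define N where "N = nat \<lceil>ln m / p\<rceil>"
  have lnm: "0 \<le> ln m" using m1 by simp
  have N1: "ln m / p \<le> real N" unfolding N_def by linarith
  have N2: "real N \<le> ln m / p + 1" unfolding N_def using lnm p0
    by (simp add: of_nat_nat)
  have "q ^ N \<le> exp (- p) ^ N"
    using q0 by (intro power_mono) (auto simp: q_def exp_ge_add_one_self[of "-p", simplified] )
  also have "\<dots> = exp (- (p * real N))" by (simp add: exp_of_nat_mult[symmetric] mult.commute)
  also have "\<dots> \<le> exp (- ln m)" using N1 p0 by (simp add: divide_le_eq mult.commute)
  also have "\<dots> = inverse m" using m1 by (simp add: exp_minus)
  finally have "q ^ N \<le> inverse m" .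
  then have "m * q ^ N \<le> m * inverse m" using m1 by (intro mult_left_mono) auto
  then have qN: "m * q ^ N \<le> 1" using m1 by simp
  define h where "h t = (if t < N then 1 else q ^ (t - N))" for t
  have le: "min 1 (m * q ^ t) \<le> h t" for t
  proof (cases "t < N")
    case True then show ?thesis by (simp add: h_def)
  next
    case False
    then have "q ^ t = q ^ N * q ^ (t - N)" by (simp add: power_add[symmetric])
    then have "m * q ^ t = (m * q ^ N) * q ^ (t - N)" by simp
    also have "\<dots> \<le> 1 * q ^ (t - N)" using qN q0 by (intro mult_right_mono) auto
    finally show ?thesis using False by (simp add: h_def)
  qed
  have hs: "summable h"
  proof -
    have "summable (\<lambda>t. h (t + N))" using q0 q1 by (simp add: h_def summable_geometric)
    then show ?thesis by simp
  qed
  have h0: "0 \<le> h t" for t using q0 by (simp add: h_def)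
  have "suminf h = (\<Sum>t. h (t + N)) + (\<Sum>i<N. h i)" by (rule suminf_split_initial_segment[OF hs])
  also have "(\<Sum>t. h (t + N)) = 1 / (1 - q)" using q0 q1 by (simp add: h_def suminf_geometric)
  also have "(\<Sum>i<N. h i) = real N" by (simp add: h_def)
  finally have hsum: "suminf h = 1 / p + real N" by (simp add: q_def)
  have "(\<Sum>t. ennreal (min 1 (m * (1 - p) ^ t))) \<le> (\<Sum>t. ennreal (h t))"
    using le by (intro suminf_le) (auto simp: q_def intro: ennreal_leI)
  also have "\<dots> = ennreal (suminf h)" by (rule suminf_ennreal2[OF h0 hs])
  also have "\<dots> \<le> ennreal ((ln m + 2) / p)"
  proof (rule ennreal_leI)
    have "1 \<le> 1 / p" using p0 p1 by simp
    then have "1 / p + real N \<le> 1 / p + ln m / p + 1 / p" using N2 by linarith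
    also have "\<dots> = (ln m + 2) / p" by (simp add: add_divide_distrib)
    finally show "suminf h \<le> (ln m + 2) / p" using hsum by simp
  qed
  finally show ?thesis .
qed



lemma num_cuts_le:
  assumes F: "F = {(x, y) \<in> V \<times> V. far V x y}"
    and B: "\<And>t. B t = {\<omega> \<in> S. \<exists>c\<in>F. \<forall>j<t. \<omega> !! j \<in> {z. \<not> separates z (fst c) (snd c)}}"
    and \<omega>: "\<omega> \<in> S"
  shows "num_cuts V \<omega> \<le> (\<Sum>t. indicator (B t) \<omega>)"
proof -
  let ?Q = "\<lambda>n. \<forall>x\<in>V. \<forall>y\<in>V. far V x y \<longrightarrow> (\<exists>j<n. separates (\<omega> !! j) x y)"
  have inB: "\<omega> \<in> B t \<longleftrightarrow> \<not> ?Q t" for t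
    using \<omega> unfolding B F by auto
  have key: "of_nat n \<le> (\<Sum>t. indicator (B t) \<omega> :: ennreal)" if "\<forall>t<n. \<not> ?Q t" for n
  proof -
    have "of_nat n = (\<Sum>t<n. indicator (B t) \<omega> :: ennreal)"
      using that inB by simp
    also have "\<dots> \<le> (\<Sum>t. indicator (B t) \<omega>)"
      by (rule sum_le_suminf) auto
    finally show ?thesis .
  qed
  show ?thesis
  proof (cases "\<exists>n. ?Q n")
    case True
    have "\<forall>t<(LEAST n. ?Q n). \<not> ?Q t" using not_less_Least by blast
    then show ?thesis using True key unfolding num_cuts_def by simp
  next
    case False
    have "(\<Sum>t. indicator (B t) \<omega> :: ennreal) = top"
    proof (rule ccontr)
      assume "(\<Sum>t. indicator (B t) \<omega> :: ennreal) \<noteq> top"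
      then obtain n where "(\<Sum>t. indicator (B t) \<omega> :: ennreal) < of_nat n"
        using ennreal_Ex_less_of_nat top.not_eq_extremum by blast
      moreover have "of_nat n \<le> (\<Sum>t. indicator (B t) \<omega> :: ennreal)" using False key by blast
      ultimately show False by simp
    qed
    then show ?thesis using False unfolding num_cuts_def by simp
  qed
qed



lemma nsep_sets: "{z. \<not> separates z x y} \<in> sets (count_space UNIV \<Otimes>\<^sub>M lborel)"
proof -
  have "{z. \<not> separates z x y} = space (count_space UNIV \<Otimes>\<^sub>M lborel) - {z. separates z x y}"
    by (auto simp: space_UNIV_pair)
  also have "\<dots> \<in> sets (count_space UNIV \<Otimes>\<^sub>M lborel)"
    by (rule sets.compl_sets[OF sep_measurable])
  finally show ?thesis .
qed

theorem lemma4p5: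
  fixes U V :: "(real ^ 'd::finite) set" and k :: nat
  assumes "k \<ge> 2" and "finite U" and "card U = k"
    and "V \<subseteq> U" and "card V \<ge> 2"
  shows "(\<integral>\<^sup>+ \<omega>. num_cuts V \<omega> \<partial>stream_space (D2' k V))
           \<le> ennreal (24 * ln (real (card V)) * s_max V * L2 V / Delta V)"
proof -
  have fin: "finite V" using assms(2,4) finite_subset by blast
  have ck: "card V \<le> k" using assms(2,3,4) card_mono by blast
  have c2: "card V \<ge> 2" by (rule assms(5))
  define D where "D = D2' k V"
  interpret D: prob_space D unfolding D_def by (rule D2'_facts(1)[OF fin c2 ck])
  define S where "S = stream_space D"
  interpret S: prob_space S unfolding S_def by (rule D.prob_space_stream_space)
  define p0 where "p0 = Delta V / (4 * s_max V * L2 V)"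
  define F where "F = {(x, y) \<in> V \<times> V. far V x y}"
  define NS where "NS c = {z. \<not> separates z (fst c) (snd c)}" for c :: "'d point \<times> 'd point"
  have setsD: "sets D = sets (count_space UNIV \<Otimes>\<^sub>M lborel)" by (simp add: D_def D2'_def)
  have spaceD: "space D = UNIV" by (simp add: D_def D2'_def space_UNIV_pair)
  have NS_sets[measurable]: "NS c \<in> sets D" for c unfolding NS_def setsD by (rule nsep_sets)
  have sep_sets: "{z. separates z x y} \<in> sets D" for x y unfolding setsD by (rule sep_measurable)
  have fF: "finite F" unfolding F_def by (rule finite_subset[of _ "V \<times> V"]) (use fin in auto)
  obtain x0 y0 where xy0: "x0 \<in> V" "y0 \<in> V" "far V x0 y0" using far_exists[OF fin c2] by blast
  have F1: "1 \<le> card F"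
  proof -
    have "(x0, y0) \<in> F" using xy0 by (simp add: F_def)
    then have "F \<noteq> {}" by auto
    then show ?thesis using fF by (simp add: Suc_le_eq card_gt_0_iff)
  qed
  have Fn: "card F \<le> card V ^ 2"
  proof -
    have "card F \<le> card (V \<times> V)" unfolding F_def using fin by (intro card_mono) auto
    then show ?thesis by (simp add: card_cartesian_product power2_eq_square)
  qed
  have Dpos: "0 < Delta V" by (rule Delta_pos[OF fin c2])
  have spos: "0 < s_max V" using s_max_bounds[OF fin c2] by simp
  have Lpos: "0 < L2 V"
  proof -
    have "0 < L2' k V" by (rule far_sep_mass(4)[OF fin c2 ck xy0])
    also have "L2' k V \<le> L2 V"
      unfolding L2'_def L2_def by (rule sum_mono2) (auto intro: Iall_finite fin)
    finally show ?thesis .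
  qed
  have p0pos: "0 < p0" unfolding p0_def using Dpos spos Lpos by simp
  have sepD: "p0 \<le> measure D {z. separates z x y}" if "x \<in> V" "y \<in> V" "far V x y" for x y
  proof -
    have "ennreal p0 \<le> emeasure D {z. separates z x y}"
      unfolding p0_def D_def by (rule D2'_facts(2)[OF fin c2 ck that])
    then have "ennreal p0 \<le> ennreal (measure D {z. separates z x y})" by (simp add: D.emeasure_eq_measure)
    then show ?thesis by (simp add: ennreal_le_iff)
  qed
  have p01: "p0 \<le> 1" using sepD[OF xy0] D.prob_le_1 by (meson order.trans)
  have NSb: "emeasure D (NS c) \<le> ennreal (1 - p0)" if cF: "c \<in> F" for c
  proof -
    obtain x y where c: "c = (x, y)" "x \<in> V" "y \<in> V" "far V x y" using cF by (cases c) (auto simp: F_def)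
    have "NS c = space D - {z. separates z x y}" by (auto simp: NS_def c spaceD)
    then have "measure D (NS c) = 1 - measure D {z. separates z x y}"
      using D.prob_compl[OF sep_sets] by simp
    also have "\<dots> \<le> 1 - p0" using sepD[OF c(2-4)] by simp
    finally show ?thesis by (simp add: D.emeasure_eq_measure ennreal_leI)
  qed
  define A where "A t c = {\<omega> \<in> space S. \<forall>j<t. \<omega> !! j \<in> NS c}" for t c
  define B where "B t = (\<Union>c\<in>F. A t c)" for t
  have A_sets: "A t c \<in> sets S" for t c unfolding A_def S_def by measurable
  have B_sets: "B t \<in> sets S" for t unfolding B_def using fF A_sets by auto
  have Aem: "emeasure S (A t c) \<le> ennreal ((1 - p0) ^ t)" if "c \<in> F" for t c
  proof -
    have "emeasure S (A t c) = emeasure D (NS c) ^ t"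
      unfolding A_def S_def by (rule D.stream_prefix[OF NS_sets])
    also have "\<dots> \<le> ennreal (1 - p0) ^ t" by (rule power_mono[OF NSb[OF that]]) simp
    also have "\<dots> = ennreal ((1 - p0) ^ t)" using p01 by (simp add: ennreal_power)
    finally show ?thesis .
  qed
  have Bem: "emeasure S (B t) \<le> ennreal (min 1 (real (card F) * (1 - p0) ^ t))" for t
  proof -
    have "emeasure S (B t) \<le> (\<Sum>c\<in>F. emeasure S (A t c))"
      unfolding B_def by (rule emeasure_subadditive_finite[OF fF]) (use A_sets in auto)
    also have "\<dots> \<le> (\<Sum>c\<in>F. ennreal ((1 - p0) ^ t))" by (rule sum_mono) (rule Aem)
    also have "\<dots> = ennreal (real (card F) * (1 - p0) ^ t)" using p01 by (simp add: ennreal_mult ennreal_of_nat_eq_real_of_nat)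
    finally have a: "emeasure S (B t) \<le> ennreal (real (card F) * (1 - p0) ^ t)" .
    have b: "emeasure S (B t) \<le> ennreal 1" using S.emeasure_le_1 by simp
    show ?thesis using a b by (cases "1 \<le> real (card F) * (1 - p0) ^ t") (auto simp: min_def)
  qed
  have Beq: "B t = {\<omega> \<in> space S. \<exists>c\<in>F. \<forall>j<t. \<omega> !! j \<in> {z. \<not> separates z (fst c) (snd c)}}" for t
    unfolding B_def A_def NS_def by auto
  have "(\<integral>\<^sup>+ \<omega>. num_cuts V \<omega> \<partial>S) \<le> (\<integral>\<^sup>+ \<omega>. (\<Sum>t. indicator (B t) \<omega>) \<partial>S)"
    by (rule nn_integral_mono) (rule num_cuts_le[OF F_def Beq])
  also have "\<dots> = (\<Sum>t. \<integral>\<^sup>+ \<omega>. indicator (B t) \<omega> \<partial>S)"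
    by (rule nn_integral_suminf) (use B_sets in auto)
  also have "\<dots> = (\<Sum>t. emeasure S (B t))" using B_sets by simp
  also have "\<dots> \<le> (\<Sum>t. ennreal (min 1 (real (card F) * (1 - p0) ^ t)))"
    by (rule suminf_le) (auto intro: Bem)
  also have "\<dots> \<le> ennreal ((ln (real (card F)) + 2) / p0)"
    by (rule tail_sum[OF p0pos p01]) (use F1 in simp)
  also have "\<dots> \<le> ennreal (24 * ln (real (card V)) * s_max V * L2 V / Delta V)"
  proof (rule ennreal_leI)
    define X where "X = s_max V * L2 V / Delta V"
    have X0: "0 < X" unfolding X_def using spos Lpos Dpos by simp
    have ip: "1 / p0 = 4 * X" unfolding p0_def X_def using spos Lpos Dpos by (simp add: field_simps)
    have "ln (real (card F)) \<le> ln (real (card V ^ 2))"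
      using F1 Fn c2 by (subst ln_le_cancel_iff) auto
    also have "\<dots> = 2 * ln (real (card V))" using c2 by (simp add: ln_realpow)
    finally have lF: "ln (real (card F)) \<le> 2 * ln (real (card V))" .
    have l2: "2 / 3 \<le> ln (real (card V))"
    proof -
      have "2 / 3 \<le> ln (2::real)" by (rule ln2_ge_two_thirds)
      also have "\<dots> \<le> ln (real (card V))" using c2 by simp
      finally show ?thesis .
    qed
    have "(ln (real (card F)) + 2) / p0 = (ln (real (card F)) + 2) * (4 * X)"
      using ip by (simp add: divide_inverse flip: ip)
    also have "\<dots> \<le> (2 * ln (real (card V)) + 2) * (4 * X)"
      using lF X0 by (intro mult_right_mono) auto
    also have "\<dots> \<le> (24 * ln (real (card V))) * X"
    proof -
      have "(2 * ln (real (card V)) + 2) * 4 \<le> 24 * ln (real (card V))" using l2 by (simp add: ring_distribs)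
      then have "((2 * ln (real (card V)) + 2) * 4) * X \<le> (24 * ln (real (card V))) * X"
        using X0 by (intro mult_right_mono) auto
      then show ?thesis by (simp add: algebra_simps)
    qed
    also have "\<dots> = 24 * ln (real (card V)) * s_max V * L2 V / Delta V" by (simp add: X_def)
    finally show "(ln (real (card F)) + 2) / p0 \<le> 24 * ln (real (card V)) * s_max V * L2 V / Delta V" .
  qed
  finally show ?thesis by (simp add: S_def D_def)
qed

end
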